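(* Let $\Omega=\{1,\dots,m\}^{\mathbb{N}}$ with shift $\sigma$, let $\mathcal{M}$ be the set of Borel probabilities on $\Omega$ with the Monge–Kantorovich metric $d_{MK}$, and let $\mathfrak{T}:\mathcal{M}\to\mathcal{M}$ be the push-forward map $\mathfrak{T}(\mu)(E)=\mu(\sigma^{-1}(E))$. Then the set of periodic points of $\mathfrak{T}$ (those $\mu\in\mathcal{M}$ with $\mathfrak{T}^r(\mu)=\mu$ for some $r\ge1$) is dense in $\mathcal{M}$.
   Context: $\Omega$ carries the metric $d_\Omega(\alpha,\beta)=2^{-k}$ with $k=\min\{i:\alpha_i\neq\beta_i\}$ (and $0$ if $\alpha=\beta$); $d_{MK}(\mu,\nu)=\sup\{\int f\,d\mu-\int f\,d\nu : f \text{ 1-Lipschitz}\}$. $\sigma(x_1,x_2,\dots)=(x_2,x_3,\dots)$. *)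

theory Defs
  imports "HOL-Probability.Probability"
begin

text \<open>The full shift on m symbols: sequences x :: nat \<Rightarrow> nat with values in {1..m}.
  Sequence positions are indexed from 0 here; position i corresponds to the paper's index i+1.\<close>

definition Omega :: "nat \<Rightarrow> (nat \<Rightarrow> nat) set" where
  "Omega m = {x. \<forall>i. x i \<in> {1..m}}"

definition dOmega :: "(nat \<Rightarrow> nat) \<Rightarrow> (nat \<Rightarrow> nat) \<Rightarrow> real" where
  "dOmega a b = (if a = b then 0 else (1/2) ^ Suc (LEAST i. a i \<noteq> b i))"

definition Omega_open :: "nat \<Rightarrow> (nat \<Rightarrow> nat) set \<Rightarrow> bool" where
  "Omega_open m U \<longleftrightarrow> U \<subseteq> Omega m \<and>
     (\<forall>x\<in>U. \<exists>e>0. \<forall>y\<in>Omega m. dOmega x y < e \<longrightarrow> y \<in> U)"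

definition Omega_borel :: "nat \<Rightarrow> (nat \<Rightarrow> nat) measure" where
  "Omega_borel m = sigma (Omega m) {U. Omega_open m U}"

definition Mprob :: "nat \<Rightarrow> (nat \<Rightarrow> nat) measure set" where
  "Mprob m = space (prob_algebra (Omega_borel m))"

definition Lip1 :: "nat \<Rightarrow> ((nat \<Rightarrow> nat) \<Rightarrow> real) set" where
  "Lip1 m = {f. \<forall>x\<in>Omega m. \<forall>y\<in>Omega m. \<bar>f x - f y\<bar> \<le> dOmega x y}"

definition dMK :: "nat \<Rightarrow> (nat \<Rightarrow> nat) measure \<Rightarrow> (nat \<Rightarrow> nat) measure \<Rightarrow> real" where
  "dMK m \<mu> \<nu> = (SUP f\<in>Lip1 m. (\<integral>x. f x \<partial>\<mu>) - (\<integral>x. f x \<partial>\<nu>))"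

definition shift :: "(nat \<Rightarrow> nat) \<Rightarrow> (nat \<Rightarrow> nat)" where
  "shift x = (\<lambda>i. x (Suc i))"

definition Tpush :: "nat \<Rightarrow> (nat \<Rightarrow> nat) measure \<Rightarrow> (nat \<Rightarrow> nat) measure" where
  "Tpush m \<mu> = distr \<mu> (Omega_borel m) shift"

end

theory Submission
  imports Defs
begin

lemma dOmega_lt_iff:
  "dOmega x y < (1/2)^k \<longleftrightarrow> (\<forall>i<k. x i = y i)"
proof (cases "x = y")
  case True then show ?thesis by (simp add: dOmega_def)
next
  case False
  define j where "j = (LEAST i. x i \<noteq> y i)"
  have ex: "\<exists>i. x i \<noteq> y i" using False by auto
  have j1: "x j \<noteq> y j" unfolding j_def by (rule LeastI_ex[OF ex])
  have j2: "\<And>i. i < j \<Longrightarrow> x i = y i" unfolding j_def using not_less_Least by blast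
  have d1: "dOmega x y = (1/2)^Suc j" using False by (simp add: dOmega_def j_def)
  have d2: "((1/2::real)^Suc j < (1/2)^k) \<longleftrightarrow> k < Suc j"
    by (rule power_strict_decreasing_iff) auto
  have d3: "k < Suc j \<longleftrightarrow> (\<forall>i<k. x i = y i)"
    using j1 j2 by (metis less_Suc_eq_le not_le order_less_le_trans)
  show ?thesis by (simp only: d1 d2 d3)
qed

lemma dOmega_le1: "dOmega x y \<le> 1"
proof -
  have "(1/2::real)^Suc j \<le> 1" for j by (rule power_le_one) auto
  thus ?thesis unfolding dOmega_def by (simp del: power_Suc)
qed

lemma small_pow: "(e::real) > 0 \<Longrightarrow> \<exists>k. (1/2::real)^k < e"
  by (rule real_arch_pow_inv) auto

lemma Omega_open_iff:
  "Omega_open m U \<longleftrightarrow> U \<subseteq> Omega m \<and>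
     (\<forall>x\<in>U. \<exists>k. \<forall>y\<in>Omega m. (\<forall>i<k. x i = y i) \<longrightarrow> y \<in> U)"
proof
  assume A: "Omega_open m U"
  show "U \<subseteq> Omega m \<and> (\<forall>x\<in>U. \<exists>k. \<forall>y\<in>Omega m. (\<forall>i<k. x i = y i) \<longrightarrow> y \<in> U)"
  proof (intro conjI ballI)
    show "U \<subseteq> Omega m" using A by (simp add: Omega_open_def)
    fix x assume "x \<in> U"
    then obtain e where e: "e > 0" "\<forall>y\<in>Omega m. dOmega x y < e \<longrightarrow> y \<in> U"
      using A by (auto simp: Omega_open_def)
    obtain k where k: "(1/2::real)^k < e" using small_pow[OF e(1)] by blast
    show "\<exists>k. \<forall>y\<in>Omega m. (\<forall>i<k. x i = y i) \<longrightarrow> y \<in> U"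
      using e k dOmega_lt_iff[of x _ k] by (intro exI[of _ k]) force
  qed
next
  assume A: "U \<subseteq> Omega m \<and> (\<forall>x\<in>U. \<exists>k. \<forall>y\<in>Omega m. (\<forall>i<k. x i = y i) \<longrightarrow> y \<in> U)"
  show "Omega_open m U" unfolding Omega_open_def
  proof (intro conjI ballI)
    show "U \<subseteq> Omega m" using A by simp
    fix x assume "x \<in> U"
    then obtain k where k: "\<forall>y\<in>Omega m. (\<forall>i<k. x i = y i) \<longrightarrow> y \<in> U" using A by blast
    show "\<exists>e>0. \<forall>y\<in>Omega m. dOmega x y < e \<longrightarrow> y \<in> U"
      using k dOmega_lt_iff[of x _ k] by (intro exI[of _ "(1/2)^k"]) auto
  qed
qed

lemma Omega_open_Pow: "{U. Omega_open m U} \<subseteq> Pow (Omega m)"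
  by (auto simp: Omega_open_def)

lemma space_Ob: "space (Omega_borel m) = Omega m"
  unfolding Omega_borel_def by (rule space_measure_of[OF Omega_open_Pow])

lemma sets_Ob: "sets (Omega_borel m) = sigma_sets (Omega m) {U. Omega_open m U}"
  unfolding Omega_borel_def by (rule sets_measure_of[OF Omega_open_Pow])

lemma open_in_Ob: "Omega_open m U \<Longrightarrow> U \<in> sets (Omega_borel m)"
  unfolding sets_Ob by (rule sigma_sets.Basic) simp

lemma cont_meas:
  assumes h: "\<And>x. x \<in> Omega m \<Longrightarrow> h x \<in> Omega m"
    and c: "\<And>x k. x \<in> Omega m \<Longrightarrow> \<exists>k'. \<forall>y\<in>Omega m. (\<forall>i<k'. x i = y i) \<longrightarrow> (\<forall>i<k. h x i = h y i)"
  shows "h \<in> measurable (Omega_borel m) (Omega_borel m)"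
proof -
  have "h \<in> measurable (Omega_borel m) (measure_of (Omega m) {U. Omega_open m U} (\<lambda>_. 0))"
  proof (rule measurable_measure_of[OF Omega_open_Pow])
    show "h \<in> space (Omega_borel m) \<rightarrow> Omega m" using h by (auto simp: space_Ob)
    fix U assume "U \<in> {U. Omega_open m U}"
    hence U: "Omega_open m U" by simp
    have "Omega_open m (h -` U \<inter> Omega m)"
      unfolding Omega_open_iff
    proof (intro conjI ballI)
      fix x assume x: "x \<in> h -` U \<inter> Omega m"
      then obtain k where k: "\<forall>y\<in>Omega m. (\<forall>i<k. h x i = y i) \<longrightarrow> y \<in> U"
        using U h unfolding Omega_open_iff by blast
      obtain k' where k': "\<forall>y\<in>Omega m. (\<forall>i<k'. x i = y i) \<longrightarrow> (\<forall>i<k. h x i = h y i)"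
        using c x by blast
      show "\<exists>k. \<forall>y\<in>Omega m. (\<forall>i<k. x i = y i) \<longrightarrow> y \<in> h -` U \<inter> Omega m"
        using k k' h by (intro exI[of _ k']) auto
    qed auto
    then show "h -` U \<inter> space (Omega_borel m) \<in> sets (Omega_borel m)"
      by (simp add: space_Ob open_in_Ob)
  qed
  then show ?thesis unfolding Omega_borel_def .
qed

lemma Lip1_meas:
  assumes f: "f \<in> Lip1 m"
  shows "f \<in> borel_measurable (Omega_borel m)"
proof (rule borel_measurableI)
  fix S :: "real set" assume S: "open S"
  have "Omega_open m (f -` S \<inter> Omega m)"
    unfolding Omega_open_def
  proof (intro conjI ballI)
    fix x assume x: "x \<in> f -` S \<inter> Omega m"
    then obtain e where e: "e > 0" "ball (f x) e \<subseteq> S"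
      using S open_contains_ball by blast
    show "\<exists>e>0. \<forall>y\<in>Omega m. dOmega x y < e \<longrightarrow> y \<in> f -` S \<inter> Omega m"
    proof (intro exI[of _ e] conjI ballI impI)
      fix y assume y: "y \<in> Omega m" "dOmega x y < e"
      have "\<bar>f x - f y\<bar> \<le> dOmega x y" using f x y unfolding Lip1_def by blast
      hence "f y \<in> ball (f x) e" using y by (simp add: dist_real_def)
      thus "y \<in> f -` S \<inter> Omega m" using e y by auto
    qed (use e in auto)
  qed auto
  then show "f -` S \<inter> space (Omega_borel m) \<in> sets (Omega_borel m)"
    by (simp add: space_Ob open_in_Ob)
qed

lemma shift_meas: "shift \<in> measurable (Omega_borel m) (Omega_borel m)"
proof (rule cont_meas)
  show "\<And>x. x \<in> Omega m \<Longrightarrow> shift x \<in> Omega m" by (auto simp: Omega_def shift_def)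
  fix x :: "nat \<Rightarrow> nat" and k
  show "\<exists>k'. \<forall>y\<in>Omega m. (\<forall>i<k'. x i = y i) \<longrightarrow> (\<forall>i<k. shift x i = shift y i)"
    by (intro exI[of _ "Suc k"]) (auto simp: shift_def)
qed

definition perext :: "nat \<Rightarrow> (nat \<Rightarrow> nat) \<Rightarrow> (nat \<Rightarrow> nat)" where
  "perext n x = (\<lambda>i. x (i mod n))"

lemma perext_meas: "n > 0 \<Longrightarrow> perext n \<in> measurable (Omega_borel m) (Omega_borel m)"
proof (rule cont_meas)
  show "\<And>x. x \<in> Omega m \<Longrightarrow> perext n x \<in> Omega m" by (auto simp: Omega_def perext_def)
  fix x :: "nat \<Rightarrow> nat" and k
  assume "n > 0"
  show "\<exists>k'. \<forall>y\<in>Omega m. (\<forall>i<k'. x i = y i) \<longrightarrow> (\<forall>i<k. perext n x i = perext n y i)"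
    by (intro exI[of _ k]) (auto simp: perext_def intro: le_less_trans[OF mod_less_eq_dividend])
qed

lemma shift_pow: "(shift ^^ r) x = (\<lambda>i. x (i + r))"
  by (induction r arbitrary: x) (auto simp: shift_def)

lemma shift_perext: "n > 0 \<Longrightarrow> (shift ^^ n) \<circ> perext n = perext n"
  by (auto simp: shift_pow perext_def fun_eq_iff)

lemma shift_pow_meas: "(shift ^^ r) \<in> measurable (Omega_borel m) (Omega_borel m)"
  by (induction r) (auto intro!: measurable_compose[OF _ shift_meas])

lemma Tpush_pow:
  assumes "h \<in> measurable M (Omega_borel m)"
  shows "(Tpush m ^^ r) (distr M (Omega_borel m) h) = distr M (Omega_borel m) ((shift ^^ r) \<circ> h)"
proof (induction r)
  case 0 then show ?case by simp
next
  case (Suc r)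
  have hm: "(shift ^^ r) \<circ> h \<in> measurable M (Omega_borel m)"
    using assms shift_pow_meas by (rule measurable_comp)
  have "(Tpush m ^^ Suc r) (distr M (Omega_borel m) h) =
        Tpush m ((Tpush m ^^ r) (distr M (Omega_borel m) h))" by simp
  also have "\<dots> = Tpush m (distr M (Omega_borel m) ((shift ^^ r) \<circ> h))"
    by (simp only: Suc.IH)
  also have "\<dots> = distr (distr M (Omega_borel m) ((shift ^^ r) \<circ> h)) (Omega_borel m) shift"
    by (simp only: Tpush_def)
  also have "\<dots> = distr M (Omega_borel m) (shift \<circ> ((shift ^^ r) \<circ> h))"
    by (rule distr_distr[OF shift_meas hm])
  finally show ?case by (simp add: comp_def)
qed

theorem lemma2p11:
  fixes m :: nat
  shows "\<forall>\<mu>\<in>Mprob m. \<forall>\<epsilon>>0. \<exists>\<nu>\<in>Mprob m.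
           (\<exists>r\<ge>1. (Tpush m ^^ r) \<nu> = \<nu>) \<and> dMK m \<nu> \<mu> < \<epsilon>"
proof (intro ballI allI impI)
  fix \<mu> and \<epsilon> :: real
  assume mu: "\<mu> \<in> Mprob m" and eps: "\<epsilon> > 0"
  have ps: "prob_space \<mu>" and sets_mu: "sets \<mu> = sets (Omega_borel m)"
    using mu by (auto simp: Mprob_def space_prob_algebra)
  have space_mu: "space \<mu> = Omega m" using sets_eq_imp_space_eq[OF sets_mu] space_Ob by simp
  obtain k where k: "(1/2::real)^k < \<epsilon>" using small_pow[OF eps] by blast
  define n where "n = Suc k"
  have n0: "n > 0" by (simp add: n_def)
  have "(1/2::real)^n \<le> (1/2)^k" unfolding n_def by (rule power_decreasing) auto
  hence nk: "(1/2::real)^n < \<epsilon>" using k by linarith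
  define g where "g = perext n"
  have gB: "g \<in> measurable (Omega_borel m) (Omega_borel m)" unfolding g_def using perext_meas[OF n0] .
  have gm: "g \<in> measurable \<mu> (Omega_borel m)"
    using gB measurable_cong_sets[OF sets_mu refl] by blast
  define \<nu> where "\<nu> = distr \<mu> (Omega_borel m) g"
  have nuM: "\<nu> \<in> Mprob m"
    unfolding Mprob_def space_prob_algebra \<nu>_def
    using prob_space.prob_space_distr[OF ps gm] by simp
  have "(Tpush m ^^ n) \<nu> = distr \<mu> (Omega_borel m) ((shift ^^ n) \<circ> g)"
    unfolding \<nu>_def by (rule Tpush_pow[OF gm])
  also have "\<dots> = \<nu>" unfolding \<nu>_def g_def shift_perext[OF n0] ..
  finally have per: "(Tpush m ^^ n) \<nu> = \<nu>" .
  have gO: "\<And>x. x \<in> Omega m \<Longrightarrow> g x \<in> Omega m" by (auto simp: g_def perext_def Omega_def)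
  have gclose: "\<And>x. dOmega (g x) x < (1/2)^n"
    unfolding dOmega_lt_iff by (simp add: g_def perext_def)
  have bound: "(\<integral>x. f x \<partial>\<nu>) - (\<integral>x. f x \<partial>\<mu>) \<le> (1/2)^n" if f: "f \<in> Lip1 m" for f
  proof -
    have fB: "f \<in> borel_measurable (Omega_borel m)" using Lip1_meas[OF f] .
    have fm: "f \<in> borel_measurable \<mu>"
      using fB measurable_cong_sets[OF sets_mu refl] by blast
    have fgm: "(\<lambda>x. f (g x)) \<in> borel_measurable \<mu>"
      using measurable_comp[OF gm fB] by (simp add: comp_def)
    obtain x0 where x0: "x0 \<in> space \<mu>" using prob_space.not_empty[OF ps] by blast
    have fb: "\<bar>f x\<bar> \<le> \<bar>f x0\<bar> + 1" if "x \<in> space \<mu>" for x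
    proof -
      have "\<bar>f x - f x0\<bar> \<le> dOmega x x0" using f that x0 space_mu unfolding Lip1_def by blast
      thus ?thesis using dOmega_le1[of x x0] by linarith
    qed
    have fi: "integrable \<mu> f"
      using fm fb by (intro finite_measure.integrable_const_bound[OF prob_space.finite_measure[OF ps], where B="\<bar>f x0\<bar> + 1"]) auto
    have fgi: "integrable \<mu> (\<lambda>x. f (g x))"
      using fgm fb gO space_mu
      by (intro finite_measure.integrable_const_bound[OF prob_space.finite_measure[OF ps], where B="\<bar>f x0\<bar> + 1"]) auto
    have "(\<integral>x. f x \<partial>\<nu>) = (\<integral>x. f (g x) \<partial>\<mu>)"
      unfolding \<nu>_def by (rule integral_distr[OF gm fB])
    hence "(\<integral>x. f x \<partial>\<nu>) - (\<integral>x. f x \<partial>\<mu>) = (\<integral>x. f (g x) - f x \<partial>\<mu>)"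
      using Bochner_Integration.integral_diff[OF fgi fi] by simp
    also have "\<dots> \<le> (\<integral>x. (1/2)^n \<partial>\<mu>)"
    proof (rule integral_mono)
      show "integrable \<mu> (\<lambda>x. f (g x) - f x)" using fgi fi by auto
      show "integrable \<mu> (\<lambda>x. (1/2::real)^n)"
        using finite_measure.integrable_const[OF prob_space.finite_measure[OF ps]] by blast
      fix x assume "x \<in> space \<mu>"
      hence "\<bar>f (g x) - f x\<bar> \<le> dOmega (g x) x" using f gO space_mu unfolding Lip1_def by blast
      thus "f (g x) - f x \<le> (1/2)^n" using gclose[of x] by linarith
    qed
    also have "\<dots> = (1/2)^n" using prob_space.prob_space[OF ps] by simp
    finally show ?thesis .
  qed
  have "(\<lambda>_. 0) \<in> Lip1 m" by (auto simp: Lip1_def dOmega_def)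
  hence "Lip1 m \<noteq> {}" by blast
  hence "dMK m \<nu> \<mu> \<le> (1/2)^n" unfolding dMK_def using bound by (rule cSUP_least)
  hence "dMK m \<nu> \<mu> < \<epsilon>" using nk by linarith
  thus "\<exists>\<nu>\<in>Mprob m. (\<exists>r\<ge>1. (Tpush m ^^ r) \<nu> = \<nu>) \<and> dMK m \<nu> \<mu> < \<epsilon>"
    using nuM per n0 by (intro bexI[of _ \<nu>]) (auto intro!: exI[of _ n])
qed

end
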